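(* Let $S_n:=Y_1+Y_2+\dots+Y_{n-1}$. Then, as $n\to\infty$, $S_n/\log(T_n)^\alpha$ converges in distribution to $\Lambda$.
   Context: Let $d\in\mathbb{N}$ and let $\Delta$ be a Borel random variable on $\mathbb{R}^d$. Assume there exist $\alpha>0$ and a random variable $\Lambda$ on $\mathbb{R}^d$ such that, for independent copies $(\Delta_i)$ of $\Delta$, $n^{-\alpha}\sum_{i=1}^n\Delta_i\to\Lambda$ in distribution. Let $T_n:=\lfloor e^{3n^{1/3}}\rfloor$. Let $(R_n)_{n\in\mathbb{N}}$ be independent Bernoulli random variables with parameters $(T_{n+1}-T_n)/T_{n+1}$, let $(\tilde\Delta_n)_{n\in\mathbb{N}}$ be independent copies of $\Delta$, independent of $(R_n)$, and set $Y_n:=R_n\tilde\Delta_n$. *)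

theory Defs
  imports "HOL-Probability.Probability"
begin

definition conv_in_distr :: "(nat \<Rightarrow> 'a::topological_space measure) \<Rightarrow> 'a measure \<Rightarrow> bool" where
  "conv_in_distr \<mu> \<nu> \<longleftrightarrow>
     (\<forall>f :: 'a \<Rightarrow> real. continuous_on UNIV f \<and> bounded (range f) \<longrightarrow>
        (\<lambda>n. integral\<^sup>L (\<mu> n) f) \<longlonglongrightarrow> integral\<^sup>L \<nu> f)"

definition T :: "nat \<Rightarrow> nat" where
  "T n = nat \<lfloor>exp (3 * real n powr (1/3))\<rfloor>"

end

theory Submission
  imports Defs "HOL-Real_Asymp.Real_Asymp"
begin

lemma T_real: "real (T n) = of_int \<lfloor>exp (3 * real n powr (1/3))\<rfloor>"
proof -
  have "exp (3 * real n powr (1/3)) \<ge> 1" by simp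
  then have "\<lfloor>exp (3 * real n powr (1/3))\<rfloor> \<ge> 0" by linarith
  then show ?thesis unfolding T_def by simp
qed

lemma T_upper: "real (T n) \<le> exp (3 * real n powr (1/3))"
  unfolding T_real by linarith

lemma T_lower: "exp (3 * real n powr (1/3)) - 1 < real (T n)"
  unfolding T_real by linarith

lemma T_ge1: "real (T n) \<ge> 1"
proof -
  have "exp (3 * real n powr (1/3)) \<ge> 1" by simp
  then have "1 \<le> \<lfloor>exp (3 * real n powr (1/3))\<rfloor>" by (simp add: le_floor_iff)
  then show ?thesis unfolding T_real by linarith
qed

lemma T_mono: "real (T n) \<le> real (T (Suc n))"
proof -
  have "real n powr (1/3) \<le> real (Suc n) powr (1/3)" by (intro powr_mono2) auto
  then have "exp (3 * real n powr (1/3)) \<le> exp (3 * real (Suc n) powr (1/3))" by simp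
  then show ?thesis unfolding T_real by (simp add: floor_mono)
qed

lemma T_ratio: "(\<lambda>n. real (T (Suc n)) / real (T n)) \<longlonglongrightarrow> 1"
proof -
  have lim1: "((\<lambda>n::nat. exp (3 * real (Suc n) powr (1/3)) / (exp (3 * real n powr (1/3)) - 1)) \<longlongrightarrow> 1) at_top"
    by real_asymp
  show ?thesis
proof (rule tendsto_sandwich[of "\<lambda>_. 1"])
  have pos: "eventually (\<lambda>n::nat. exp (3 * real n powr (1/3)) - 1 > 0) at_top"
    by real_asymp
  show "eventually (\<lambda>n. 1 \<le> real (T (Suc n)) / real (T n)) sequentially"
  proof (intro always_eventually allI)
    fix n show "1 \<le> real (T (Suc n)) / real (T n)"
      using T_mono[of n] T_ge1[of n] by (simp add: field_simps)
  qed
  show "eventually (\<lambda>n. real (T (Suc n)) / real (T n) \<le> exp (3 * real (Suc n) powr (1/3)) / (exp (3 * real n powr (1/3)) - 1)) sequentially"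
    using pos
  proof eventually_elim
    case (elim n)
    show ?case
      using T_upper[of "Suc n"] T_lower[of n] T_ge1[of n] elim
      by (intro frac_le) auto
  qed
qed (use lim1 in auto)
qed

lemma lnT_inf: "filterlim (\<lambda>n. ln (real (T n))) at_top sequentially"
proof (rule filterlim_at_top_mono[of "\<lambda>n. ln (exp (3 * real n powr (1/3)) - 1)"])
  show "filterlim (\<lambda>n::nat. ln (exp (3 * real n powr (1/3)) - 1)) at_top at_top"
    by real_asymp
  have pos: "eventually (\<lambda>n::nat. exp (3 * real n powr (1/3)) - 1 > 0) at_top"
    by real_asymp
  then show "eventually (\<lambda>n. ln (exp (3 * real n powr (1/3)) - 1) \<le> ln (real (T n))) sequentially"
  proof eventually_elim
    case (elim n)
    show ?case using elim T_lower[of n] T_ge1[of n] by (subst ln_le_cancel_iff) auto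
  qed
qed

definition pp :: "nat \<Rightarrow> real" where
  "pp i = (real (T (Suc i)) - real (T i)) / real (T (Suc i))"

lemma pp_bounds: "0 \<le> pp i" "pp i \<le> 1"
  using T_mono[of i] T_ge1[of i] T_ge1[of "Suc i"] unfolding pp_def by (auto simp: field_simps)

lemma ln_T_nonneg: "0 \<le> ln (real (T n))"
  using T_ge1[of n] by simp

lemma pp_le_lndiff: "pp i \<le> ln (real (T (Suc i))) - ln (real (T i))"
proof -
  define x where "x = real (T (Suc i)) / real (T i)"
  have x0: "x > 0" unfolding x_def using T_ge1[of i] T_ge1[of "Suc i"] by simp
  have "ln (1/x) \<le> 1/x - 1" by (rule ln_le_minus_one) (use x0 in simp)
  then have "1 - 1/x \<le> ln x" using x0 by (simp add: ln_div)
  moreover have "pp i = 1 - 1/x" unfolding pp_def x_def using T_ge1[of i] T_ge1[of "Suc i"]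
    by (simp add: field_simps)
  moreover have "ln x = ln (real (T (Suc i))) - ln (real (T i))"
    unfolding x_def using T_ge1[of i] T_ge1[of "Suc i"] by (simp add: ln_div)
  ultimately show ?thesis by simp
qed

lemma lndiff_le: "ln (real (T (Suc i))) - ln (real (T i)) \<le> (real (T (Suc i)) / real (T i)) * pp i"
proof -
  define x where "x = real (T (Suc i)) / real (T i)"
  have x0: "x > 0" unfolding x_def using T_ge1[of i] T_ge1[of "Suc i"] by simp
  have "ln x \<le> x - 1" by (rule ln_le_minus_one) (use x0 in simp)
  moreover have "x * pp i = x - 1" unfolding pp_def x_def using T_ge1[of i] T_ge1[of "Suc i"]
    by (simp add: field_simps)
  moreover have "ln x = ln (real (T (Suc i))) - ln (real (T i))"
    unfolding x_def using T_ge1[of i] T_ge1[of "Suc i"] by (simp add: ln_div)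
  ultimately show ?thesis unfolding x_def by simp
qed

lemma telescope_ln: "a \<le> b \<Longrightarrow> (\<Sum>i\<in>{a..<b}. ln (real (T (Suc i))) - ln (real (T i))) = ln (real (T b)) - ln (real (T a))"
  by (rule sum_Suc_diff')

lemma m_le_l: "(\<Sum>i\<in>{1..<n}. pp i) \<le> ln (real (T n))"
proof (cases "1 \<le> n")
  case True
  have "(\<Sum>i\<in>{1..<n}. pp i) \<le> (\<Sum>i\<in>{1..<n}. ln (real (T (Suc i))) - ln (real (T i)))"
    by (intro sum_mono pp_le_lndiff)
  also have "\<dots> = ln (real (T n)) - ln (real (T 1))" using True by (rule telescope_ln)
  also have "\<dots> \<le> ln (real (T n))" using ln_T_nonneg[of 1] by simp
  finally show ?thesis .
qed (use ln_T_nonneg in auto)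

lemma m_close_l:
  assumes "\<delta> > 0"
  shows "eventually (\<lambda>n. \<bar>(\<Sum>i\<in>{1..<n}. pp i) - ln (real (T n))\<bar> \<le> \<delta> * ln (real (T n))) sequentially"
proof -
  have "eventually (\<lambda>i. dist (real (T (Suc i)) / real (T i)) 1 < \<delta>/2) sequentially"
    using T_ratio assms unfolding tendsto_iff by (meson half_gt_zero)
  then obtain N0 where N0': "\<And>i. i \<ge> N0 \<Longrightarrow> \<bar>real (T (Suc i)) / real (T i) - 1\<bar> < \<delta>/2"
    unfolding eventually_sequentially dist_real_def by blast
  have N0: "real (T (Suc i)) / real (T i) \<le> 1 + \<delta>/2" if "i \<ge> N0" for i
    using N0'[OF that] by linarith
  define N where "N = max 1 N0"
  have ev: "eventually (\<lambda>n. ln (real (T n)) \<ge> 2 * ln (real (T N)) / \<delta>) sequentially"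
    using lnT_inf by (simp add: filterlim_at_top)
  have ev2: "eventually (\<lambda>n. n \<ge> N) sequentially" by (rule eventually_ge_at_top)
  show ?thesis using ev ev2
  proof eventually_elim
    case (elim n)
    let ?m = "\<Sum>i\<in>{1..<n}. pp i"
    let ?l = "\<lambda>n. ln (real (T n))"
    have "?l n - ?l N = (\<Sum>i\<in>{N..<n}. ?l (Suc i) - ?l i)"
      using elim by (simp add: telescope_ln)
    also have "\<dots> \<le> (\<Sum>i\<in>{N..<n}. (1 + \<delta>/2) * pp i)"
    proof (intro sum_mono)
      fix i assume i: "i \<in> {N..<n}"
      have "?l (Suc i) - ?l i \<le> (real (T (Suc i)) / real (T i)) * pp i" by (rule lndiff_le)
      also have "\<dots> \<le> (1 + \<delta>/2) * pp i"
        using N0[of i] i pp_bounds[of i] unfolding N_def by (intro mult_right_mono) auto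
      finally show "?l (Suc i) - ?l i \<le> (1 + \<delta>/2) * pp i" .
    qed
    also have "\<dots> = (1 + \<delta>/2) * (\<Sum>i\<in>{N..<n}. pp i)" by (simp add: sum_distrib_left)
    also have "(\<Sum>i\<in>{N..<n}. pp i) \<le> ?m"
      using pp_bounds unfolding N_def by (intro sum_mono2) auto
    then have "(1 + \<delta>/2) * (\<Sum>i\<in>{N..<n}. pp i) \<le> (1 + \<delta>/2) * ?m"
      using assms by (intro mult_left_mono) auto
    finally have A: "?l n - ?l N \<le> (1 + \<delta>/2) * ?m" by simp
    have B: "?m \<le> ?l n" by (rule m_le_l)
    have C: "?l N \<le> \<delta>/2 * ?l n" using elim assms by (simp add: field_simps)
    have "?m \<ge> 0" using pp_bounds by (simp add: sum_nonneg)
    have D: "\<delta>/2 * ?m \<le> \<delta>/2 * ?l n" using B assms by (intro mult_left_mono) auto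
    have A': "?l n - ?l N \<le> ?m + \<delta>/2 * ?m" using A by (simp add: distrib_right)
    have E: "\<delta> * ?l n = \<delta>/2 * ?l n + \<delta>/2 * ?l n" by simp
    have "?l n - ?m \<le> \<delta> * ?l n" using A' C D E by linarith
    with B show ?case by simp
  qed
qed

lemma bc_integrable:
  fixes g :: "'a::euclidean_space \<Rightarrow> real"
  assumes "prob_space N" "sets N = sets borel" "continuous_on UNIV g" "\<And>x. \<bar>g x\<bar> \<le> B"
  shows "integrable N g"
proof -
  interpret prob_space N by fact
  have "g \<in> borel_measurable borel" using assms(3) by (rule borel_measurable_continuous_onI)
  then have m: "g \<in> borel_measurable N" by (simp only: measurable_cong_sets[OF assms(2) refl])
  show ?thesis by (rule integrable_const_bound[of _ B]) (use assms(4) m in auto)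
qed

lemma slutsky_unif:
  fixes \<nu> :: "nat \<Rightarrow> 'a::euclidean_space measure" and L :: "'a measure" and f :: "'a \<Rightarrow> real"
  assumes P: "\<And>k. prob_space (\<nu> k)" "\<And>k. sets (\<nu> k) = sets borel" "prob_space L" "sets L = sets borel"
    and conv: "conv_in_distr \<nu> L"
    and f: "continuous_on UNIV f" "bounded (range f)"
    and e: "\<epsilon> > 0"
  shows "\<exists>K \<eta>. \<eta> > 0 \<and> (\<forall>k\<ge>K. \<forall>lam. \<bar>lam - 1\<bar> < \<eta> \<longrightarrow> \<bar>(\<integral>y. f (lam *\<^sub>R y) \<partial>\<nu> k) - (\<integral>y. f y \<partial>L)\<bar> < \<epsilon>)"
proof -
  interpret L: prob_space L by fact
  obtain Bd where Bd: "Bd > 0" "\<And>x. \<bar>f x\<bar> \<le> Bd"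
    using f(2) unfolding bounded_pos by auto
  define \<delta> where "\<delta> = \<epsilon> / (16 * Bd)"
  have \<delta>: "\<delta> > 0" unfolding \<delta>_def using e Bd by simp
  have "(\<lambda>m. measure L (cball 0 (real m))) \<longlonglongrightarrow> measure L (\<Union>m. cball (0::'a) (real m))"
    by (rule L.finite_Lim_measure_incseq) (auto simp: P(4) incseq_def)
  also have "(\<Union>m. cball (0::'a) (real m)) = space L"
  proof -
    have "(\<Union>m. cball (0::'a) (real m)) = UNIV"
      by (auto simp: mem_cball) (metis real_arch_simple)
    moreover have "space L = UNIV" using sets_eq_imp_space_eq[OF P(4)] by simp
    ultimately show ?thesis by simp
  qed
  finally have "eventually (\<lambda>m. measure L (cball 0 (real m)) > 1 - \<delta>) sequentially"
    using \<delta> L.prob_space by (intro order_tendstoD) auto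
  then obtain m0 where m0: "measure L (cball 0 (real m0)) > 1 - \<delta>"
    by (auto simp: eventually_sequentially)
  define r where "r = real m0"
  have r0: "r \<ge> 0" unfolding r_def by simp
  define h where "h y = max 0 (min 1 (r + 1 - norm y))" for y :: 'a
  have h_cont: "continuous_on UNIV h" unfolding h_def by (intro continuous_intros)
  have h_bd: "\<bar>h y\<bar> \<le> 1" for y unfolding h_def by auto
  have h_bounded: "bounded (range h)" using h_bd by (auto simp: bounded_iff intro!: exI[of _ 1])
  have hL: "(\<integral>y. h y \<partial>L) > 1 - \<delta>"
  proof -
    have "measure L (cball 0 r) = (\<integral>y. indicator (cball 0 r) y \<partial>L)"
      by (simp add: P(4))
    also have "\<dots> \<le> (\<integral>y. h y \<partial>L)"
      by (intro integral_mono bc_integrable[OF P(3,4) h_cont h_bd] integrable_real_indicator)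
         (auto simp: P(4) h_def indicator_def L.emeasure_finite less_top[symmetric])
    finally show ?thesis using m0 unfolding r_def by simp
  qed
  have ev1: "eventually (\<lambda>k. (\<integral>y. h y \<partial>\<nu> k) > 1 - 2 * \<delta>) sequentially"
  proof -
    have "(\<lambda>k. \<integral>y. h y \<partial>\<nu> k) \<longlonglongrightarrow> (\<integral>y. h y \<partial>L)"
      using conv h_cont h_bounded unfolding conv_in_distr_def by blast
    then show ?thesis using hL \<delta> by (intro order_tendstoD) auto
  qed
  have ev2: "eventually (\<lambda>k. \<bar>(\<integral>y. f y \<partial>\<nu> k) - (\<integral>y. f y \<partial>L)\<bar> < \<epsilon>/4) sequentially"
  proof -
    have "(\<lambda>k. \<integral>y. f y \<partial>\<nu> k) \<longlonglongrightarrow> (\<integral>y. f y \<partial>L)"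
      using conv f unfolding conv_in_distr_def by blast
    then show ?thesis using e unfolding tendsto_iff dist_real_def
      by (meson divide_pos_pos zero_less_numeral)
  qed
  obtain K where K: "\<And>k. k \<ge> K \<Longrightarrow> (\<integral>y. h y \<partial>\<nu> k) > 1 - 2 * \<delta> \<and> \<bar>(\<integral>y. f y \<partial>\<nu> k) - (\<integral>y. f y \<partial>L)\<bar> < \<epsilon>/4"
    using eventually_conj[OF ev1 ev2] unfolding eventually_sequentially by blast
  have "uniformly_continuous_on (cball (0::'a) (2 * r + 2)) f"
    by (rule compact_uniformly_continuous) (auto intro: continuous_on_subset[OF f(1)])
  then have uc': "\<forall>e>0. \<exists>d>0. \<forall>x\<in>cball 0 (2*r+2). \<forall>x'\<in>cball 0 (2*r+2). dist x' x < d \<longrightarrow> dist (f x') (f x) < e"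
    unfolding uniformly_continuous_on_def .
  have e4: "\<epsilon>/4 > 0" using e by simp
  have "\<exists>d>0. \<forall>x\<in>cball 0 (2*r+2). \<forall>x'\<in>cball 0 (2*r+2). dist x' x < d \<longrightarrow> dist (f x') (f x) < \<epsilon>/4"
    using uc'[rule_format, OF e4] .
  then obtain \<rho> where \<rho>: "\<rho> > 0" "\<And>x x'. x \<in> cball 0 (2*r+2) \<Longrightarrow> x' \<in> cball 0 (2*r+2) \<Longrightarrow> dist x' x < \<rho> \<Longrightarrow> dist (f x') (f x) < \<epsilon>/4"
    by blast
  define \<eta> where "\<eta> = min 1 (\<rho> / (r + 2))"
  have \<eta>: "\<eta> > 0" unfolding \<eta>_def using \<rho> r0 by simp
  have pw: "\<bar>f (lam *\<^sub>R y) - f y\<bar> \<le> \<epsilon>/4 + 2 * Bd * (1 - h y)" if l: "\<bar>lam - 1\<bar> < \<eta>" for lam y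
  proof (cases "norm y \<le> r + 1")
    case True
    have h01: "h y \<le> 1" unfolding h_def by auto
    have "norm (lam *\<^sub>R y - y) = \<bar>lam - 1\<bar> * norm y"
      by (metis norm_scaleR scaleR_diff_left scaleR_one)
    also have "\<dots> \<le> \<eta> * (r + 1)" using l True by (intro mult_mono) auto
    also have "\<dots> < \<rho>"
    proof -
      have "\<eta> * (r + 1) \<le> \<rho> / (r + 2) * (r + 1)" unfolding \<eta>_def using r0 by (intro mult_right_mono) auto
      also have "\<dots> < \<rho>" using \<rho> r0 by (simp add: field_simps)
      finally show ?thesis .
    qed
    finally have d: "dist (lam *\<^sub>R y) y < \<rho>" by (simp add: dist_norm)
    have "norm (lam *\<^sub>R y) = \<bar>lam\<bar> * norm y" by simp
    also have "\<dots> \<le> 2 * (r + 1)" using l True \<eta>_def by (intro mult_mono) auto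
    finally have c1: "lam *\<^sub>R y \<in> cball 0 (2*r+2)" by (simp add: mem_cball)
    have c2: "y \<in> cball 0 (2*r+2)" using True r0 by (simp add: mem_cball)
    have "\<bar>f (lam *\<^sub>R y) - f y\<bar> < \<epsilon>/4" using \<rho>(2)[OF c2 c1 d] by (simp add: dist_real_def)
    then show ?thesis using Bd h01 by (smt (verit) mult_nonneg_nonneg)
  next
    case False
    then have "h y = 0" unfolding h_def by auto
    then show ?thesis using Bd(2)[of "lam *\<^sub>R y"] Bd(2)[of y] e by auto
  qed
  show ?thesis
  proof (intro exI[of _ K] exI[of _ \<eta>] conjI allI impI \<eta>)
    fix k lam assume k: "k \<ge> K" and l: "\<bar>lam - 1\<bar> < \<eta>"
    interpret N: prob_space "\<nu> k" by (rule P(1))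
    have fl_cont: "continuous_on UNIV (\<lambda>y. f (lam *\<^sub>R y))"
      by (intro continuous_on_compose2[OF f(1)] continuous_intros) auto
    have i1: "integrable (\<nu> k) (\<lambda>y. f (lam *\<^sub>R y))"
      by (rule bc_integrable[OF P(1,2) fl_cont Bd(2)])
    have i2: "integrable (\<nu> k) f" by (rule bc_integrable[OF P(1,2) f(1) Bd(2)])
    have i3: "integrable (\<nu> k) h" by (rule bc_integrable[OF P(1,2) h_cont h_bd])
    have "\<bar>(\<integral>y. f (lam *\<^sub>R y) \<partial>\<nu> k) - (\<integral>y. f y \<partial>\<nu> k)\<bar> = \<bar>\<integral>y. f (lam *\<^sub>R y) - f y \<partial>\<nu> k\<bar>"
      using i1 i2 by simp
    also have "\<dots> \<le> (\<integral>y. \<epsilon>/4 + 2 * Bd * (1 - h y) \<partial>\<nu> k)"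
      by (intro integral_abs_bound_integral pw l) (use i1 i2 i3 in auto)
    also have "\<dots> = \<epsilon>/4 + 2 * Bd * (1 - (\<integral>y. h y \<partial>\<nu> k))"
      using i3 N.prob_space by (simp add: algebra_simps)
    also have "\<dots> \<le> \<epsilon>/4 + 2 * Bd * (2 * \<delta>)"
      using K[OF k] Bd by (intro add_left_mono mult_left_mono) auto
    also have "\<dots> = \<epsilon>/4 + \<epsilon>/4" unfolding \<delta>_def using Bd by (simp add: field_simps)
    finally have A: "\<bar>(\<integral>y. f (lam *\<^sub>R y) \<partial>\<nu> k) - (\<integral>y. f y \<partial>\<nu> k)\<bar> \<le> \<epsilon>/4 + \<epsilon>/4" .
    have B: "\<bar>(\<integral>y. f y \<partial>\<nu> k) - (\<integral>y. f y \<partial>L)\<bar> < \<epsilon>/4" using K[OF k] by blast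
    show "\<bar>(\<integral>y. f (lam *\<^sub>R y) \<partial>\<nu> k) - (\<integral>y. f y \<partial>L)\<bar> < \<epsilon>" using A B e by linarith
  qed
qed

fun convpow :: "'a::euclidean_space measure \<Rightarrow> nat \<Rightarrow> 'a measure" where
  "convpow D 0 = return borel 0"
| "convpow D (Suc k) = distr (D \<Otimes>\<^sub>M convpow D k) borel (\<lambda>(x,y). x + y)"

lemma (in prob_space) indep_vars_sum_gen:
  fixes X :: "'i \<Rightarrow> 'a \<Rightarrow> 'b::euclidean_space"
  assumes I: "finite I" "i \<notin> I" and indep: "indep_vars (\<lambda>_. borel) X (insert i I)"
  shows "indep_var borel (X i) borel (\<lambda>\<omega>. \<Sum>i\<in>I. X i \<omega>)"
proof -
  have "indep_var
    borel ((\<lambda>f. f i) \<circ> (\<lambda>\<omega>. restrict (\<lambda>i. X i \<omega>) {i}))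
    borel ((\<lambda>f. \<Sum>i\<in>I. f i) \<circ> (\<lambda>\<omega>. restrict (\<lambda>i. X i \<omega>) I))"
    using I by (intro indep_var_compose[OF indep_var_restrict[OF indep]] ) auto
  also have "((\<lambda>f. f i) \<circ> (\<lambda>\<omega>. restrict (\<lambda>i. X i \<omega>) {i})) = X i"
    by auto
  also have "((\<lambda>f. \<Sum>i\<in>I. f i) \<circ> (\<lambda>\<omega>. restrict (\<lambda>i. X i \<omega>) I)) = (\<lambda>\<omega>. \<Sum>i\<in>I. X i \<omega>)"
    by (auto cong: rev_conj_cong)
  finally show ?thesis .
qed

lemma (in prob_space) sum_law:
  fixes X :: "'i \<Rightarrow> 'a \<Rightarrow> 'b::euclidean_space"
  assumes indep: "indep_vars (\<lambda>_. borel) X I" and D: "\<And>i. i \<in> I \<Longrightarrow> distr M borel (X i) = D"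
    and J: "finite J" "J \<subseteq> I"
  shows "distr M borel (\<lambda>\<omega>. \<Sum>i\<in>J. X i \<omega>) = convpow D (card J)"
  using J
proof (induction J rule: finite_induct)
  case empty
  show ?case by (simp add: distr_const)
next
  case (insert j J)
  have rv: "\<And>i. i \<in> I \<Longrightarrow> random_variable borel (X i)"
    using indep unfolding indep_vars_def by auto
  have ind: "indep_var borel (X j) borel (\<lambda>\<omega>. \<Sum>i\<in>J. X i \<omega>)"
    by (rule indep_vars_sum_gen[OF insert(1,2)]) (rule indep_vars_subset[OF indep insert(4)])
  have eq: "distr M borel (X j) \<Otimes>\<^sub>M distr M borel (\<lambda>\<omega>. \<Sum>i\<in>J. X i \<omega>) =
      distr M (borel \<Otimes>\<^sub>M borel) (\<lambda>x. (X j x, \<Sum>i\<in>J. X i x))"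
    using ind unfolding indep_var_distribution_eq by blast
  have pm: "(\<lambda>x. (X j x, \<Sum>i\<in>J. X i x)) \<in> measurable M (borel \<Otimes>\<^sub>M borel)"
    using rv insert(4) by (intro measurable_Pair borel_measurable_sum) auto
  have plus: "(\<lambda>(x::'b,y). x + y) \<in> measurable (borel \<Otimes>\<^sub>M borel) borel"
    by measurable
  have "distr M borel (\<lambda>\<omega>. \<Sum>i\<in>insert j J. X i \<omega>) = distr M borel ((\<lambda>(x,y). x + y) \<circ> (\<lambda>x. (X j x, \<Sum>i\<in>J. X i x)))"
    using insert by (simp add: comp_def)
  also have "\<dots> = distr (distr M (borel \<Otimes>\<^sub>M borel) (\<lambda>x. (X j x, \<Sum>i\<in>J. X i x))) borel (\<lambda>(x,y). x + y)"
    by (rule distr_distr[OF plus pm, symmetric])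
  also have "\<dots> = distr (D \<Otimes>\<^sub>M convpow D (card J)) borel (\<lambda>(x,y). x + y)"
    using eq[symmetric] insert D by simp
  also have "\<dots> = convpow D (card (insert j J))" using insert by simp
  finally show ?case .
qed

locale L8 = prob_space M for M :: "'b measure" +
  fixes D L :: "'a::euclidean_space measure" and \<alpha> :: real
    and \<Delta>s Dt :: "nat \<Rightarrow> 'b \<Rightarrow> 'a" and R :: "nat \<Rightarrow> 'b \<Rightarrow> bool"
  assumes alpha: "\<alpha> > 0"
    and Lp: "prob_space L" and Ls: "sets L = sets borel"
    and Dmeas: "\<And>i. \<Delta>s i \<in> borel_measurable M" and Ddistr: "\<And>i. distr M borel (\<Delta>s i) = D"
    and Dind: "indep_vars (\<lambda>_. borel) \<Delta>s UNIV"
    and hyp: "conv_in_distr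
           (\<lambda>n. distr M borel (\<lambda>\<omega>. (real n powr (-\<alpha>)) *\<^sub>R (\<Sum>i\<in>{1..n}. \<Delta>s i \<omega>))) L"
    and Dtmeas: "\<And>n. Dt n \<in> borel_measurable M" and Dtdistr: "\<And>n. distr M borel (Dt n) = D"
    and Rmeas: "\<And>n. R n \<in> measurable M (count_space UNIV)"
    and Rdistr: "\<And>n. distr M (count_space UNIV) (R n)
               = measure_pmf (bernoulli_pmf ((real (T (Suc n)) - real (T n)) / real (T (Suc n))))"
    and indall: "indep_sets
           (\<lambda>k. case k of
                   Inl n \<Rightarrow> {R n -` A \<inter> space M | A. A \<in> sets (count_space (UNIV :: bool set))}
                 | Inr n \<Rightarrow> {Dt n -` A \<inter> space M | A. A \<in> sets (borel :: 'a measure)})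
           UNIV"
begin

definition e :: 'a where "e = (SOME b. b \<in> Basis)"

lemma e_Basis: "e \<in> Basis"
  unfolding e_def by (rule someI_ex) (use nonempty_Basis in blast)

lemma e_inner: "e \<bullet> e = 1" using e_Basis by simp

definition Z :: "nat + nat \<Rightarrow> 'b \<Rightarrow> 'a" where
  "Z = case_sum (\<lambda>n \<omega>. of_bool (R n \<omega>) *\<^sub>R e) Dt"

definition B :: "nat \<Rightarrow> 'b \<Rightarrow> real" where
  "B i \<omega> = of_bool (R i \<omega>)"

lemma B_meas[measurable]: "B i \<in> borel_measurable M"
  unfolding B_def by (rule measurable_compose[OF Rmeas, of "of_bool"]) simp

lemma Dt_meas[measurable]: "Dt i \<in> borel_measurable M" by (rule Dtmeas)

lemma B_Z: "B i \<omega> = Z (Inl i) \<omega> \<bullet> e"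
  unfolding B_def Z_def using e_inner by simp

lemma Z_meas: "Z k \<in> borel_measurable M"
proof (cases k)
  case (Inl n)
  have "(\<lambda>\<omega>. of_bool (R n \<omega>) *\<^sub>R e) = (\<lambda>\<omega>. B n \<omega> *\<^sub>R e)" unfolding B_def by simp
  then show ?thesis using Inl unfolding Z_def by simp
next
  case (Inr n) then show ?thesis unfolding Z_def by simp
qed

lemma indZ: "indep_vars (\<lambda>_. borel) Z UNIV"
  unfolding indep_vars_def2
proof (intro conjI ballI Z_meas)
  show "indep_sets (\<lambda>i. {Z i -` A \<inter> space M |A. A \<in> sets borel}) UNIV"
  proof (rule indep_sets_mono_sets[OF indall])
    fix k :: "nat + nat"
    show "{Z k -` A \<inter> space M |A. A \<in> sets borel} \<subseteq>
      (case k of Inl n \<Rightarrow> {R n -` A \<inter> space M | A. A \<in> sets (count_space (UNIV :: bool set))}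
                 | Inr n \<Rightarrow> {Dt n -` A \<inter> space M | A. A \<in> sets (borel :: 'a measure)})"
    proof (cases k)
      case (Inl n)
      have eqA: "Z k -` A \<inter> space M = R n -` {b. of_bool b *\<^sub>R e \<in> A} \<inter> space M" for A
        using Inl unfolding Z_def by auto
      have "{Z k -` A \<inter> space M |A. A \<in> sets borel} \<subseteq> {R n -` A \<inter> space M | A. A \<in> sets (count_space (UNIV :: bool set))}"
      proof (rule subsetI)
        fix X assume "X \<in> {Z k -` A \<inter> space M |A. A \<in> sets borel}"
        then obtain A where "X = Z k -` A \<inter> space M" by blast
        then have "X = R n -` {b. of_bool b *\<^sub>R e \<in> A} \<inter> space M" using eqA by simp
        then show "X \<in> {R n -` A \<inter> space M | A. A \<in> sets (count_space (UNIV :: bool set))}"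
          by (intro CollectI exI[of _ "{b. of_bool b *\<^sub>R e \<in> A}"]) simp
      qed
      then show ?thesis using Inl by simp
    next
      case (Inr n)
      then show ?thesis unfolding Z_def by auto
    qed
  qed
qed

lemma EB: "(\<integral>\<omega>. B i \<omega> \<partial>M) = pp i"
proof -
  have "(\<integral>\<omega>. B i \<omega> \<partial>M) = (\<integral>b. of_bool b \<partial>distr M (count_space UNIV) (R i))"
    unfolding B_def by (subst integral_distr[OF Rmeas]) auto
  also have "\<dots> = (\<integral>b. of_bool b \<partial>measure_pmf (bernoulli_pmf (pp i)))"
    unfolding Rdistr pp_def ..
  also have "\<dots> = (\<Sum>b\<in>UNIV. pmf (bernoulli_pmf (pp i)) b *\<^sub>R of_bool b)"
    by (rule integral_measure_pmf) auto
  also have "\<dots> = pp i" using pp_bounds[of i] by (simp add: UNIV_bool)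
  finally show ?thesis .
qed

lemma B01: "B i \<omega> = 0 \<or> B i \<omega> = 1" unfolding B_def by simp

lemma B_abs: "\<bar>B i \<omega>\<bar> \<le> 1" unfolding B_def by simp

lemma bdd_integrable:
  assumes "g \<in> borel_measurable M" "\<And>\<omega>. \<bar>g \<omega>\<bar> \<le> C"
  shows "integrable M (g :: 'b \<Rightarrow> real)"
  by (rule integrable_const_bound[of _ C]) (use assms in auto)

lemma Eg_B: "(\<integral>\<omega>. g (B i \<omega>) \<partial>M) = pp i * g 1 + (1 - pp i) * g 0"
proof -
  have eq: "g (B i \<omega>) = g 0 + (g 1 - g 0) * B i \<omega>" for \<omega>
    using B01[of i \<omega>] by auto
  have int: "integrable M (B i)" by (rule bdd_integrable[of _ 1]) (use B_abs in auto)
  have "(\<integral>\<omega>. g (B i \<omega>) \<partial>M) = (\<integral>\<omega>. g 0 + (g 1 - g 0) * B i \<omega> \<partial>M)"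
    by (simp only: eq)
  also have "\<dots> = g 0 + (g 1 - g 0) * pp i" using int prob_space by (simp add: EB)
  finally show ?thesis by (simp add: algebra_simps)
qed

lemma prodB:
  fixes g :: "nat \<Rightarrow> real \<Rightarrow> real"
  assumes K: "finite K"
  shows "(\<integral>\<omega>. (\<Prod>i\<in>K. g i (B i \<omega>)) \<partial>M) = (\<Prod>i\<in>K. \<integral>\<omega>. g i (B i \<omega>) \<partial>M)"
proof -
  define Y where "Y k x = g (projl k) 0 + (g (projl k) 1 - g (projl k) 0) * (x \<bullet> e)" for k :: "nat + nat" and x :: 'a
  have Ym: "Y k \<in> borel_measurable borel" for k
    unfolding Y_def by measurable
  have ind: "indep_vars (\<lambda>_. borel) (\<lambda>k \<omega>. Y k (Z k \<omega>)) (Inl ` K)"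
    by (rule indep_vars_compose2[OF indep_vars_subset[OF indZ]]) (use Ym in auto)
  have YZ: "Y (Inl i) (Z (Inl i) \<omega>) = g i (B i \<omega>)" for i \<omega>
    using B01[of i \<omega>] unfolding Y_def by (auto simp: B_Z[symmetric])
  have gm: "(\<lambda>\<omega>. g i (B i \<omega>)) \<in> borel_measurable M" for i
  proof -
    have "(\<lambda>\<omega>. g i (B i \<omega>)) = (\<lambda>\<omega>. if R i \<omega> then g i 1 else g i 0)"
      unfolding B_def by auto
    also have "\<dots> \<in> borel_measurable M"
      by (rule measurable_compose[OF Rmeas, of "\<lambda>b. if b then g i 1 else g i 0"]) simp
    finally show ?thesis .
  qed
  have gint: "integrable M (\<lambda>\<omega>. g i (B i \<omega>))" for i
    by (rule bdd_integrable[OF gm, of _ "\<bar>g i 0\<bar> + \<bar>g i 1\<bar>"]) (auto simp: B_def)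
  have "(\<integral>\<omega>. (\<Prod>k\<in>Inl ` K. Y k (Z k \<omega>)) \<partial>M) = (\<Prod>k\<in>Inl ` K. \<integral>\<omega>. Y k (Z k \<omega>) \<partial>M)"
    by (rule indep_vars_lebesgue_integral[OF _ ind]) (use K gint YZ in auto)
  then show ?thesis
    by (simp add: prod.reindex YZ)
qed

end

context L8 begin

definition w :: "nat set \<Rightarrow> nat \<Rightarrow> 'b \<Rightarrow> real" where
  "w J i \<omega> = (if i \<in> J then B i \<omega> else 1 - B i \<omega>)"

definition q :: "nat set \<Rightarrow> nat \<Rightarrow> real" where
  "q J i = (if i \<in> J then pp i else 1 - pp i)"

definition \<phi> :: "('a \<Rightarrow> real) \<Rightarrow> nat \<Rightarrow> real \<Rightarrow> real" where
  "\<phi> f k c = (\<integral>x. f (c *\<^sub>R x) \<partial>convpow D k)"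

lemma w_meas[measurable]: "w J i \<in> borel_measurable M"
  unfolding w_def by measurable

lemma Ew_prod: "finite A \<Longrightarrow> (\<integral>\<omega>. (\<Prod>i\<in>A. w J i \<omega>) \<partial>M) = (\<Prod>i\<in>A. q J i)"
proof -
  assume A: "finite A"
  have "(\<integral>\<omega>. (\<Prod>i\<in>A. w J i \<omega>) \<partial>M) = (\<integral>\<omega>. (\<Prod>i\<in>A. (\<lambda>i b. if i \<in> J then b else 1 - b) i (B i \<omega>)) \<partial>M)"
    unfolding w_def by simp
  also have "\<dots> = (\<Prod>i\<in>A. \<integral>\<omega>. (\<lambda>i b. if i \<in> J then b else 1 - b) i (B i \<omega>) \<partial>M)"
    by (rule prodB[OF A])
  also have "\<dots> = (\<Prod>i\<in>A. q J i)"
    by (intro prod.cong refl, subst Eg_B) (auto simp: q_def)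
  finally show ?thesis .
qed

lemma prod_w: "finite A \<Longrightarrow> J \<subseteq> A \<Longrightarrow> (\<Prod>i\<in>A. w J i \<omega>) = (if J = {i\<in>A. R i \<omega>} then 1 else 0)"
proof -
  assume A: "finite A" and J: "J \<subseteq> A"
  show ?thesis
  proof (cases "J = {i\<in>A. R i \<omega>}")
    case True
    then have "w J i \<omega> = 1" if "i \<in> A" for i using that unfolding w_def B_def by auto
    then show ?thesis using True by simp
  next
    case False
    then obtain i where i: "i \<in> A" "(i \<in> J) \<noteq> R i \<omega>" using J by auto
    then have "w J i \<omega> = 0" unfolding w_def B_def by auto
    then show ?thesis using False A i by (auto intro: prod_zero)
  qed
qed

lemma pointwise:
  assumes "finite A"
  shows "(\<Sum>J\<in>Pow A. (\<Prod>i\<in>A. w J i \<omega>) * G J) = G {i\<in>A. R i \<omega>}"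
proof -
  have "(\<Sum>J\<in>Pow A. (\<Prod>i\<in>A. w J i \<omega>) * G J) = (\<Sum>J\<in>Pow A. if J = {i\<in>A. R i \<omega>} then G J else 0)"
    using assms by (intro sum.cong refl) (auto simp: prod_w)
  also have "\<dots> = G {i\<in>A. R i \<omega>}" using assms by (simp add: sum.delta')
  finally show ?thesis .
qed

lemma S_eq: "finite A \<Longrightarrow> (\<Sum>i\<in>A. of_bool (R i \<omega>) *\<^sub>R Dt i \<omega>) = (\<Sum>i\<in>{i\<in>A. R i \<omega>}. Dt i \<omega>)"
  by (subst sum.inter_filter) (auto intro!: sum.cong)

lemma convpow_Dt: "finite J \<Longrightarrow> distr M borel (\<lambda>\<omega>. \<Sum>i\<in>J. Dt i \<omega>) = convpow D (card J)"
proof -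
  assume J: "finite J"
  have ind: "indep_vars (\<lambda>_. borel) Z (range Inr)" by (rule indep_vars_subset[OF indZ]) auto
  have "distr M borel (\<lambda>\<omega>. \<Sum>k\<in>Inr ` J. Z k \<omega>) = convpow D (card (Inr ` J :: (nat + nat) set))"
    by (rule sum_law[OF ind]) (use J Dtdistr in \<open>auto simp: Z_def\<close>)
  moreover have "(\<lambda>\<omega>. \<Sum>k\<in>Inr ` J. Z k \<omega>) = (\<lambda>\<omega>. \<Sum>i\<in>J. Dt i \<omega>)"
    by (simp add: sum.reindex Z_def)
  moreover have "card (Inr ` J :: (nat + nat) set) = card J" by (simp add: card_image)
  ultimately show ?thesis by simp
qed

lemma convpow_Ds: "distr M borel (\<lambda>\<omega>. \<Sum>i\<in>{1..k}. \<Delta>s i \<omega>) = convpow D k"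
  using sum_law[OF Dind, where J="{1..k}"] Ddistr by simp

lemma convpow_prob: "prob_space (convpow D k)"
proof -
  have "prob_space (distr M borel (\<lambda>\<omega>. \<Sum>i\<in>{1..k}. \<Delta>s i \<omega>))"
    by (rule prob_space_distr) (use Dmeas in measurable)
  then show ?thesis unfolding convpow_Ds .
qed

lemma convpow_sets: "sets (convpow D k) = sets borel"
  by (cases k) auto

lemma mix_term:
  assumes A: "finite A" and J: "J \<subseteq> A" and f: "continuous_on UNIV f" "\<And>x. \<bar>f x\<bar> \<le> Bd"
  shows "(\<integral>\<omega>. (\<Prod>i\<in>A. w J i \<omega>) * f (c *\<^sub>R (\<Sum>i\<in>J. Dt i \<omega>)) \<partial>M) = (\<Prod>i\<in>A. q J i) * \<phi> f (card J) c"
proof -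
  have fm[measurable]: "f \<in> borel_measurable borel" using f(1) by (rule borel_measurable_continuous_onI)
  have finJ: "finite J" using A J finite_subset by blast
  have ind: "indep_var (PiM (Inl ` A) (\<lambda>_. borel)) (\<lambda>\<omega>. restrict (\<lambda>k. Z k \<omega>) (Inl ` A))
                       (PiM (Inr ` J) (\<lambda>_. borel)) (\<lambda>\<omega>. restrict (\<lambda>k. Z k \<omega>) (Inr ` J))"
    by (rule indep_var_restrict[OF indZ]) auto
  define g1 where "g1 x = (\<Prod>i\<in>A. if i \<in> J then x (Inl i) \<bullet> e else 1 - x (Inl i) \<bullet> e)" for x :: "nat + nat \<Rightarrow> 'a"
  define g2 where "g2 x = f (c *\<^sub>R (\<Sum>i\<in>J. x (Inr i)))" for x :: "nat + nat \<Rightarrow> 'a"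
  have g1m: "g1 \<in> borel_measurable (PiM (Inl ` A) (\<lambda>_. borel))"
    unfolding g1_def by measurable
  have g2m: "g2 \<in> borel_measurable (PiM (Inr ` J) (\<lambda>_. borel))"
    unfolding g2_def by measurable
  have ind2: "indep_var borel (g1 \<circ> (\<lambda>\<omega>. restrict (\<lambda>k. Z k \<omega>) (Inl ` A))) borel (g2 \<circ> (\<lambda>\<omega>. restrict (\<lambda>k. Z k \<omega>) (Inr ` J)))"
    by (rule indep_var_compose[OF ind g1m g2m])
  have e1: "(g1 \<circ> (\<lambda>\<omega>. restrict (\<lambda>k. Z k \<omega>) (Inl ` A))) = (\<lambda>\<omega>. \<Prod>i\<in>A. w J i \<omega>)"
    unfolding g1_def w_def comp_def by (intro ext prod.cong refl) (auto simp: B_Z)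
  have e2: "(g2 \<circ> (\<lambda>\<omega>. restrict (\<lambda>k. Z k \<omega>) (Inr ` J))) = (\<lambda>\<omega>. f (c *\<^sub>R (\<Sum>i\<in>J. Dt i \<omega>)))"
    unfolding g2_def by (auto simp: Z_def intro!: sum.cong)
  have ind3: "indep_var borel (\<lambda>\<omega>. \<Prod>i\<in>A. w J i \<omega>) borel (\<lambda>\<omega>. f (c *\<^sub>R (\<Sum>i\<in>J. Dt i \<omega>)))"
    using ind2 unfolding e1 e2 .
  have wb: "\<bar>w J i \<omega>\<bar> \<le> 1" for i \<omega> unfolding w_def B_def by auto
  have int1: "integrable M (\<lambda>\<omega>. \<Prod>i\<in>A. w J i \<omega>)"
    by (rule bdd_integrable[of _ 1]) (auto simp: abs_prod wb intro!: prod_le_1)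
  have int2: "integrable M (\<lambda>\<omega>. f (c *\<^sub>R (\<Sum>i\<in>J. Dt i \<omega>)))"
    by (rule bdd_integrable[of _ Bd]) (use f in auto)
  have "(\<integral>\<omega>. (\<Prod>i\<in>A. w J i \<omega>) * f (c *\<^sub>R (\<Sum>i\<in>J. Dt i \<omega>)) \<partial>M) =
        (\<integral>\<omega>. (\<Prod>i\<in>A. w J i \<omega>) \<partial>M) * (\<integral>\<omega>. f (c *\<^sub>R (\<Sum>i\<in>J. Dt i \<omega>)) \<partial>M)"
    by (rule indep_var_lebesgue_integral[OF ind3 int1 int2])
  also have "(\<integral>\<omega>. (\<Prod>i\<in>A. w J i \<omega>) \<partial>M) = (\<Prod>i\<in>A. q J i)" by (rule Ew_prod[OF A])
  also have "(\<integral>\<omega>. f (c *\<^sub>R (\<Sum>i\<in>J. Dt i \<omega>)) \<partial>M) = (\<integral>x. f (c *\<^sub>R x) \<partial>distr M borel (\<lambda>\<omega>. \<Sum>i\<in>J. Dt i \<omega>))"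
    by (subst integral_distr) auto
  also have "\<dots> = \<phi> f (card J) c" unfolding \<phi>_def convpow_Dt[OF finJ] ..
  finally show ?thesis .
qed

end

context L8 begin

lemma w_abs: "\<bar>w J i \<omega>\<bar> \<le> 1" unfolding w_def B_def by auto

lemma prodw_abs: "\<bar>\<Prod>i\<in>A. w J i \<omega>\<bar> \<le> 1"
  by (auto simp: abs_prod w_abs intro!: prod_le_1)

lemma Ef_formula:
  assumes A: "finite A" and f: "continuous_on UNIV f" "\<And>x. \<bar>f x\<bar> \<le> Bd"
  shows "(\<integral>\<omega>. f (c *\<^sub>R (\<Sum>i\<in>A. of_bool (R i \<omega>) *\<^sub>R Dt i \<omega>)) \<partial>M) =
         (\<Sum>J\<in>Pow A. (\<Prod>i\<in>A. q J i) * \<phi> f (card J) c)"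
proof -
  have fm[measurable]: "f \<in> borel_measurable borel" using f(1) by (rule borel_measurable_continuous_onI)
  have "(\<integral>\<omega>. f (c *\<^sub>R (\<Sum>i\<in>A. of_bool (R i \<omega>) *\<^sub>R Dt i \<omega>)) \<partial>M) =
        (\<integral>\<omega>. (\<Sum>J\<in>Pow A. (\<Prod>i\<in>A. w J i \<omega>) * f (c *\<^sub>R (\<Sum>i\<in>J. Dt i \<omega>))) \<partial>M)"
    by (intro Bochner_Integration.integral_cong refl)
       (simp add: pointwise[OF A, where G="\<lambda>J. f (c *\<^sub>R (\<Sum>i\<in>J. Dt i _))"] S_eq[OF A])
  also have "\<dots> = (\<Sum>J\<in>Pow A. (\<integral>\<omega>. (\<Prod>i\<in>A. w J i \<omega>) * f (c *\<^sub>R (\<Sum>i\<in>J. Dt i \<omega>)) \<partial>M))"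
  proof (rule Bochner_Integration.integral_sum)
    fix J assume "J \<in> Pow A"
    show "integrable M (\<lambda>\<omega>. (\<Prod>i\<in>A. w J i \<omega>) * f (c *\<^sub>R (\<Sum>i\<in>J. Dt i \<omega>)))"
    proof (rule bdd_integrable[of _ Bd])
      fix \<omega>
      have "\<bar>(\<Prod>i\<in>A. w J i \<omega>) * f (c *\<^sub>R (\<Sum>i\<in>J. Dt i \<omega>))\<bar> \<le> 1 * Bd"
        unfolding abs_mult by (intro mult_mono prodw_abs f(2)) auto
      then show "\<bar>(\<Prod>i\<in>A. w J i \<omega>) * f (c *\<^sub>R (\<Sum>i\<in>J. Dt i \<omega>))\<bar> \<le> Bd" by simp
    qed measurable
  qed
  also have "\<dots> = (\<Sum>J\<in>Pow A. (\<Prod>i\<in>A. q J i) * \<phi> f (card J) c)"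
    by (intro sum.cong refl mix_term[OF A _ f]) auto
  finally show ?thesis .
qed

lemma EPsi_formula:
  assumes A: "finite A"
  shows "(\<integral>\<omega>. \<Psi> (card {i\<in>A. R i \<omega>}) \<partial>M) = (\<Sum>J\<in>Pow A. (\<Prod>i\<in>A. q J i) * \<Psi> (card J))"
proof -
  have "(\<integral>\<omega>. \<Psi> (card {i\<in>A. R i \<omega>}) \<partial>M) = (\<integral>\<omega>. (\<Sum>J\<in>Pow A. (\<Prod>i\<in>A. w J i \<omega>) * \<Psi> (card J)) \<partial>M)"
    by (intro Bochner_Integration.integral_cong refl)
       (simp add: pointwise[OF A, where G="\<lambda>J. \<Psi> (card J)"])
  also have "\<dots> = (\<Sum>J\<in>Pow A. (\<integral>\<omega>. (\<Prod>i\<in>A. w J i \<omega>) * \<Psi> (card J) \<partial>M))"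
  proof (rule Bochner_Integration.integral_sum)
    fix J assume "J \<in> Pow A"
    show "integrable M (\<lambda>\<omega>. (\<Prod>i\<in>A. w J i \<omega>) * \<Psi> (card J))"
    proof (rule bdd_integrable[of _ "\<bar>\<Psi> (card J)\<bar>"])
      fix \<omega>
      have "\<bar>(\<Prod>i\<in>A. w J i \<omega>) * \<Psi> (card J)\<bar> \<le> 1 * \<bar>\<Psi> (card J)\<bar>"
        unfolding abs_mult by (intro mult_mono prodw_abs) auto
      then show "\<bar>(\<Prod>i\<in>A. w J i \<omega>) * \<Psi> (card J)\<bar> \<le> \<bar>\<Psi> (card J)\<bar>" by simp
    qed measurable
  qed
  also have "\<dots> = (\<Sum>J\<in>Pow A. (\<Prod>i\<in>A. q J i) * \<Psi> (card J))"
    by (intro sum.cong refl) (simp add: Ew_prod[OF A])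
  finally show ?thesis .
qed

lemma Psi_meas:
  assumes A: "finite A"
  shows "(\<lambda>\<omega>. \<Psi> (card {i\<in>A. R i \<omega>}) :: real) \<in> borel_measurable M"
proof -
  have "(\<lambda>\<omega>. \<Psi> (card {i\<in>A. R i \<omega>})) = (\<lambda>\<omega>. (\<Sum>J\<in>Pow A. (\<Prod>i\<in>A. w J i \<omega>) * \<Psi> (card J)))"
    by (simp add: pointwise[OF A, where G="\<lambda>J. \<Psi> (card J)"])
  also have "\<dots> \<in> borel_measurable M" by measurable
  finally show ?thesis .
qed

lemma card_B: "finite A \<Longrightarrow> real (card {i\<in>A. R i \<omega>}) = (\<Sum>i\<in>A. B i \<omega>)"
proof -
  assume A: "finite A"
  have e: "{i\<in>A. R i \<omega>} = A \<inter> {i. R i \<omega>}" by auto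
  show ?thesis unfolding B_def using A by (simp add: sum.inter_filter[symmetric] e)
qed

lemma EC: "(\<integral>\<omega>. (B i \<omega> - pp i) * (B j \<omega> - pp j) \<partial>M) = (if i = j then pp i * (1 - pp i) else 0)"
proof (cases "i = j")
  case True
  have "(\<integral>\<omega>. (B i \<omega> - pp i) * (B j \<omega> - pp j) \<partial>M) = (\<integral>\<omega>. (\<lambda>b. (b - pp i) * (b - pp i)) (B i \<omega>) \<partial>M)"
    using True by simp
  also have "\<dots> = pp i * (1 - pp i)" by (subst Eg_B) (simp add: algebra_simps power2_eq_square)
  finally show ?thesis using True by simp
next
  case False
  have "(\<integral>\<omega>. (B i \<omega> - pp i) * (B j \<omega> - pp j) \<partial>M) = (\<integral>\<omega>. (\<Prod>k\<in>{i,j}. (\<lambda>k b. b - pp k) k (B k \<omega>)) \<partial>M)"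
    using False by simp
  also have "\<dots> = (\<Prod>k\<in>{i,j}. \<integral>\<omega>. (\<lambda>k b. b - pp k) k (B k \<omega>) \<partial>M)"
    by (rule prodB) simp
  also have "\<dots> = 0"
  proof -
    have "(\<integral>\<omega>. (\<lambda>k b. b - pp k) i (B i \<omega>) \<partial>M) = 0"
      by (subst Eg_B) (simp add: algebra_simps)
    then show ?thesis using False by simp
  qed
  finally show ?thesis using False by simp
qed

lemma var_bound:
  assumes A: "finite A"
  shows "(\<integral>\<omega>. ((\<Sum>i\<in>A. B i \<omega>) - (\<Sum>i\<in>A. pp i))\<^sup>2 \<partial>M) \<le> (\<Sum>i\<in>A. pp i)"
proof -
  have int: "integrable M (\<lambda>\<omega>. (B i \<omega> - pp i) * (B j \<omega> - pp j))" for i j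
  proof (rule bdd_integrable[of _ 1])
    fix \<omega>
    have "\<bar>B i \<omega> - pp i\<bar> \<le> 1" "\<bar>B j \<omega> - pp j\<bar> \<le> 1"
      using B01[of i \<omega>] B01[of j \<omega>] pp_bounds[of i] pp_bounds[of j] by auto
    then have "\<bar>B i \<omega> - pp i\<bar> * \<bar>B j \<omega> - pp j\<bar> \<le> 1 * 1" by (intro mult_mono) auto
    then show "\<bar>(B i \<omega> - pp i) * (B j \<omega> - pp j)\<bar> \<le> 1" by (simp add: abs_mult)
  qed measurable
  have eq: "((\<Sum>i\<in>A. B i \<omega>) - (\<Sum>i\<in>A. pp i))\<^sup>2 = (\<Sum>i\<in>A. \<Sum>j\<in>A. (B i \<omega> - pp i) * (B j \<omega> - pp j))" for \<omega>
    by (simp add: power2_eq_square sum_subtractf[symmetric] sum_product)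
  have "(\<integral>\<omega>. ((\<Sum>i\<in>A. B i \<omega>) - (\<Sum>i\<in>A. pp i))\<^sup>2 \<partial>M) = (\<integral>\<omega>. (\<Sum>i\<in>A. \<Sum>j\<in>A. (B i \<omega> - pp i) * (B j \<omega> - pp j)) \<partial>M)"
    by (simp only: eq)
  also have "\<dots> = (\<Sum>i\<in>A. \<Sum>j\<in>A. (\<integral>\<omega>. (B i \<omega> - pp i) * (B j \<omega> - pp j) \<partial>M))"
    using int by (simp add: Bochner_Integration.integral_sum integrable_sum)
  also have "\<dots> = (\<Sum>i\<in>A. pp i * (1 - pp i))"
    by (simp add: EC A)
  also have "\<dots> \<le> (\<Sum>i\<in>A. pp i)"
    using pp_bounds by (intro sum_mono) (simp add: mult_left_le)
  finally show ?thesis .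
qed

lemma chebyshev_B:
  assumes A: "finite A" and t: "t > 0"
  shows "(\<integral>\<omega>. of_bool (\<bar>(\<Sum>i\<in>A. B i \<omega>) - (\<Sum>i\<in>A. pp i)\<bar> \<ge> t) \<partial>M) \<le> (\<Sum>i\<in>A. pp i) / t\<^sup>2"
proof -
  let ?X = "\<lambda>\<omega>. (\<Sum>i\<in>A. B i \<omega>) - (\<Sum>i\<in>A. pp i)"
  have int2: "integrable M (\<lambda>\<omega>. (?X \<omega>)\<^sup>2)"
  proof (rule bdd_integrable[of _ "(2 * real (card A))^2"])
    fix \<omega>
    have "\<bar>?X \<omega>\<bar> \<le> \<bar>\<Sum>i\<in>A. B i \<omega>\<bar> + \<bar>\<Sum>i\<in>A. pp i\<bar>"
      by (rule abs_triangle_ineq4)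
    also have "\<dots> \<le> (\<Sum>i\<in>A. \<bar>B i \<omega>\<bar>) + (\<Sum>i\<in>A. \<bar>pp i\<bar>)"
      by (intro add_mono sum_abs)
    also have "\<dots> \<le> real (card A) + real (card A)"
      using B_abs pp_bounds by (intro add_mono) (auto intro!: sum_bounded_above[where K=1, simplified])
    finally have "\<bar>?X \<omega>\<bar> \<le> 2 * real (card A)" by simp
    then have "\<bar>?X \<omega>\<bar>\<^sup>2 \<le> (2 * real (card A))\<^sup>2" by (intro power_mono) auto
    then show "\<bar>(?X \<omega>)\<^sup>2\<bar> \<le> (2 * real (card A))\<^sup>2" by simp
  qed measurable
  have int1: "integrable M (\<lambda>\<omega>. of_bool (\<bar>?X \<omega>\<bar> \<ge> t) :: real)"
    by (rule bdd_integrable[of _ 1]) auto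
  have "(\<integral>\<omega>. of_bool (\<bar>?X \<omega>\<bar> \<ge> t) \<partial>M) \<le> (\<integral>\<omega>. (?X \<omega>)\<^sup>2 / t\<^sup>2 \<partial>M)"
  proof (rule integral_mono[OF int1])
    show "integrable M (\<lambda>\<omega>. (?X \<omega>)\<^sup>2 / t\<^sup>2)" using int2 by simp
    fix \<omega>
    show "of_bool (\<bar>?X \<omega>\<bar> \<ge> t) \<le> (?X \<omega>)\<^sup>2 / t\<^sup>2"
    proof (cases "\<bar>?X \<omega>\<bar> \<ge> t")
      case True
      then have "t\<^sup>2 \<le> \<bar>?X \<omega>\<bar>\<^sup>2" using t by (intro power_mono) auto
      then show ?thesis using True t by simp
    qed simp
  qed
  also have "\<dots> = (\<integral>\<omega>. (?X \<omega>)\<^sup>2 \<partial>M) / t\<^sup>2" by simp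
  also have "\<dots> \<le> (\<Sum>i\<in>A. pp i) / t\<^sup>2"
    using var_bound[OF A] t by (intro divide_right_mono) auto
  finally show ?thesis .
qed

end

context L8 begin

lemma phi_bound:
  assumes f: "continuous_on UNIV f" "\<And>x. \<bar>f x\<bar> \<le> Bd"
  shows "\<bar>\<phi> f k c\<bar> \<le> Bd"
proof -
  interpret N: prob_space "convpow D k" by (rule convpow_prob)
  have fc: "continuous_on UNIV (\<lambda>x. f (c *\<^sub>R x))"
    by (intro continuous_on_compose2[OF f(1)] continuous_intros) auto
  have int: "integrable (convpow D k) (\<lambda>x. f (c *\<^sub>R x))"
    by (rule bc_integrable[OF convpow_prob convpow_sets fc f(2)])
  have "\<bar>\<phi> f k c\<bar> \<le> (\<integral>x. Bd \<partial>convpow D k)"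
    unfolding \<phi>_def by (rule integral_abs_bound_integral[OF int]) (auto simp: f(2))
  also have "\<dots> = Bd" by (simp add: N.prob_space)
  finally show ?thesis .
qed

lemma phi_link:
  assumes f: "continuous_on UNIV f"
  shows "(\<integral>y. f (lam *\<^sub>R y) \<partial>distr M borel (\<lambda>\<omega>. (real k powr (-\<alpha>)) *\<^sub>R (\<Sum>i\<in>{1..k}. \<Delta>s i \<omega>)))
     = \<phi> f k (lam * real k powr (-\<alpha>))"
proof -
  have fm[measurable]: "f \<in> borel_measurable borel" using f by (rule borel_measurable_continuous_onI)
  note Dmeas[measurable]
  have "(\<integral>y. f (lam *\<^sub>R y) \<partial>distr M borel (\<lambda>\<omega>. (real k powr (-\<alpha>)) *\<^sub>R (\<Sum>i\<in>{1..k}. \<Delta>s i \<omega>)))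
      = (\<integral>\<omega>. f (lam *\<^sub>R ((real k powr (-\<alpha>)) *\<^sub>R (\<Sum>i\<in>{1..k}. \<Delta>s i \<omega>))) \<partial>M)"
    by (subst integral_distr) auto
  also have "\<dots> = (\<integral>\<omega>. f ((lam * real k powr (-\<alpha>)) *\<^sub>R (\<Sum>i\<in>{1..k}. \<Delta>s i \<omega>)) \<partial>M)"
    by simp
  also have "\<dots> = (\<integral>x. f ((lam * real k powr (-\<alpha>)) *\<^sub>R x) \<partial>distr M borel (\<lambda>\<omega>. \<Sum>i\<in>{1..k}. \<Delta>s i \<omega>))"
    by (subst integral_distr) auto
  also have "\<dots> = \<phi> f k (lam * real k powr (-\<alpha>))"
    unfolding convpow_Ds \<phi>_def ..
  finally show ?thesis .
qed

lemma slutsky_phi: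
  assumes f: "continuous_on UNIV f" "bounded (range f)" and e: "\<epsilon> > 0"
  shows "\<exists>K \<eta>. \<eta> > 0 \<and> (\<forall>k\<ge>K. \<forall>lam. \<bar>lam - 1\<bar> < \<eta> \<longrightarrow> \<bar>\<phi> f k (lam * real k powr (-\<alpha>)) - (\<integral>y. f y \<partial>L)\<bar> < \<epsilon>)"
proof -
  note Dmeas[measurable]
  have "\<exists>K \<eta>. \<eta> > 0 \<and> (\<forall>k\<ge>K. \<forall>lam. \<bar>lam - 1\<bar> < \<eta> \<longrightarrow>
     \<bar>(\<integral>y. f (lam *\<^sub>R y) \<partial>distr M borel (\<lambda>\<omega>. (real k powr (-\<alpha>)) *\<^sub>R (\<Sum>i\<in>{1..k}. \<Delta>s i \<omega>))) - (\<integral>y. f y \<partial>L)\<bar> < \<epsilon>)"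
  proof (rule slutsky_unif[OF _ _ Lp Ls hyp f e])
    fix k
    show "prob_space (distr M borel (\<lambda>\<omega>. (real k powr (-\<alpha>)) *\<^sub>R (\<Sum>i\<in>{1..k}. \<Delta>s i \<omega>)))"
      by (rule prob_space_distr) measurable
  qed simp
  then show ?thesis unfolding phi_link[OF f(1)] .
qed

theorem main:
  "conv_in_distr
     (\<lambda>n. distr M borel
        (\<lambda>\<omega>. (1 / (ln (real (T n)) powr \<alpha>)) *\<^sub>R
              (\<Sum>i\<in>{1..<n}. of_bool (R i \<omega>) *\<^sub>R Dt i \<omega>))) L"
  unfolding conv_in_distr_def
proof (intro allI impI)
  fix f :: "'a \<Rightarrow> real"
  assume fa: "continuous_on UNIV f \<and> bounded (range f)"
  then have f: "continuous_on UNIV f" "bounded (range f)" by auto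
  have fm[measurable]: "f \<in> borel_measurable borel" using f(1) by (rule borel_measurable_continuous_onI)
  obtain Bd where Bd: "Bd > 0" "\<And>x. \<bar>f x\<bar> \<le> Bd"
    using f(2) unfolding bounded_pos by auto
  interpret LL: prob_space L by (rule Lp)
  define EL where "EL = (\<integral>y. f y \<partial>L)"
  have EL_bd: "\<bar>EL\<bar> \<le> Bd"
  proof -
    have int: "integrable L f" by (rule bc_integrable[OF Lp Ls f(1) Bd(2)])
    have "\<bar>EL\<bar> \<le> (\<integral>x. Bd \<partial>L)"
      unfolding EL_def by (rule integral_abs_bound_integral[OF int]) (auto simp: Bd(2))
    also have "\<dots> = Bd" by (simp add: LL.prob_space)
    finally show ?thesis .
  qed
  define ll where "ll n = ln (real (T n))" for n
  define c where "c n = 1 / (ll n powr \<alpha>)" for n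
  define Psi where "Psi n k = \<phi> f k (c n)" for n k
  define A where "A n = {1..<n}" for n :: nat
  have finA: "finite (A n)" for n unfolding A_def by simp
  have repr: "(\<integral>y. f y \<partial>distr M borel (\<lambda>\<omega>. (1 / (ln (real (T n)) powr \<alpha>)) *\<^sub>R
              (\<Sum>i\<in>{1..<n}. of_bool (R i \<omega>) *\<^sub>R Dt i \<omega>)))
        = (\<integral>\<omega>. Psi n (card {i\<in>A n. R i \<omega>}) \<partial>M)" for n
  proof -
    have "(\<integral>y. f y \<partial>distr M borel (\<lambda>\<omega>. (1 / (ln (real (T n)) powr \<alpha>)) *\<^sub>R
              (\<Sum>i\<in>{1..<n}. of_bool (R i \<omega>) *\<^sub>R Dt i \<omega>)))
       = (\<integral>\<omega>. f (c n *\<^sub>R (\<Sum>i\<in>A n. of_bool (R i \<omega>) *\<^sub>R Dt i \<omega>)) \<partial>M)"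
    proof (subst integral_distr)
      show "(\<lambda>\<omega>. (1 / (ln (real (T n)) powr \<alpha>)) *\<^sub>R (\<Sum>i\<in>{1..<n}. of_bool (R i \<omega>) *\<^sub>R Dt i \<omega>)) \<in> borel_measurable M"
        unfolding B_def[symmetric] by measurable
    qed (auto simp: c_def ll_def A_def)
    also have "\<dots> = (\<Sum>J\<in>Pow (A n). (\<Prod>i\<in>A n. q J i) * \<phi> f (card J) (c n))"
      by (rule Ef_formula[OF finA f(1) Bd(2)])
    also have "\<dots> = (\<integral>\<omega>. Psi n (card {i\<in>A n. R i \<omega>}) \<partial>M)"
      unfolding Psi_def by (rule EPsi_formula[OF finA, of "\<lambda>k. \<phi> f k (c n)", symmetric])
    finally show ?thesis .
  qed
  show "(\<lambda>n. \<integral>y. f y \<partial>distr M borel (\<lambda>\<omega>. (1 / (ln (real (T n)) powr \<alpha>)) *\<^sub>R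
              (\<Sum>i\<in>{1..<n}. of_bool (R i \<omega>) *\<^sub>R Dt i \<omega>))) \<longlonglongrightarrow> (\<integral>y. f y \<partial>L)"
    unfolding repr EL_def[symmetric]
  proof (rule tendstoI)
    fix \<epsilon> :: real assume e: "\<epsilon> > 0"
    have e2: "\<epsilon>/2 > 0" using e by simp
    obtain K \<eta> where \<eta>: "\<eta> > 0" and K: "\<And>k lam. k \<ge> K \<Longrightarrow> \<bar>lam - 1\<bar> < \<eta> \<Longrightarrow> \<bar>\<phi> f k (lam * real k powr (-\<alpha>)) - EL\<bar> < \<epsilon>/2"
      using slutsky_phi[OF f e2] unfolding EL_def by blast
    have "isCont (\<lambda>x::real. x powr \<alpha>) 1" by (auto intro!: continuous_intros)
    then obtain \<delta>0 where \<delta>0: "\<delta>0 > 0" "\<And>x. dist x 1 < \<delta>0 \<Longrightarrow> dist (x powr \<alpha>) (1 powr \<alpha>) < \<eta>"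
      unfolding continuous_at_eps_delta using \<eta> by blast
    define \<delta> where "\<delta> = min \<delta>0 (1/2)"
    have \<delta>: "\<delta> > 0" "\<delta> \<le> 1/2" "\<delta> \<le> \<delta>0" unfolding \<delta>_def using \<delta>0 by auto
    have ev1: "eventually (\<lambda>n. \<bar>(\<Sum>i\<in>A n. pp i) - ll n\<bar> \<le> \<delta>/2 * ll n) sequentially"
      using m_close_l[of "\<delta>/2"] \<delta> unfolding A_def ll_def by simp
    have ev2: "eventually (\<lambda>n. ll n \<ge> max (2 * real K + 2) (16 * Bd / (\<delta>\<^sup>2 * \<epsilon>) + 1)) sequentially"
      using lnT_inf unfolding ll_def filterlim_at_top by blast
    show "eventually (\<lambda>n. dist (\<integral>\<omega>. Psi n (card {i\<in>A n. R i \<omega>}) \<partial>M) EL < \<epsilon>) sequentially"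
      using ev1 ev2
    proof eventually_elim
      case (elim n)
      define m where "m = (\<Sum>i\<in>A n. pp i)"
      define t where "t = \<delta> * ll n / 2"
      have l_pos: "ll n > 0" using elim(2) by simp
      have l_K: "ll n \<ge> 2 * real K + 2" using elim(2) by simp
      have l_big: "ll n > 16 * Bd / (\<delta>\<^sup>2 * \<epsilon>)" using elim(2) by simp
      have t: "t > 0" unfolding t_def using \<delta> l_pos by simp
      have m_le: "m \<le> ll n" unfolding m_def A_def ll_def by (rule m_le_l)
      have m_close: "\<bar>m - ll n\<bar> \<le> t" using elim(1) unfolding m_def t_def by simp
      define X where "X \<omega> = (\<Sum>i\<in>A n. B i \<omega>)" for \<omega>
      have X_card: "real (card {i\<in>A n. R i \<omega>}) = X \<omega>" for \<omega> unfolding X_def by (rule card_B[OF finA])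
      have Psi_bd: "\<bar>Psi n k\<bar> \<le> Bd" for k unfolding Psi_def by (rule phi_bound[OF f(1) Bd(2)])
      have pw: "\<bar>Psi n (card {i\<in>A n. R i \<omega>}) - EL\<bar> \<le> \<epsilon>/2 + 2 * Bd * of_bool (\<bar>X \<omega> - m\<bar> \<ge> t)" for \<omega>
      proof (cases "\<bar>X \<omega> - m\<bar> \<ge> t")
        case True
        have "\<bar>Psi n (card {i\<in>A n. R i \<omega>}) - EL\<bar> \<le> \<bar>Psi n (card {i\<in>A n. R i \<omega>})\<bar> + \<bar>EL\<bar>" by simp
        also have "\<dots> \<le> 2 * Bd" using Psi_bd[of "card {i\<in>A n. R i \<omega>}"] EL_bd by linarith
        finally show ?thesis using True e by simp
      next
        case False
        define k where "k = card {i\<in>A n. R i \<omega>}"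
        have Xk: "X \<omega> = real k" unfolding k_def X_card ..
        have close: "\<bar>X \<omega> - ll n\<bar> < \<delta> * ll n" using False m_close unfolding t_def by linarith
        have "X \<omega> > ll n / 2"
        proof -
          have "\<delta> * ll n \<le> 1/2 * ll n" using \<delta> l_pos by (intro mult_right_mono) auto
          then show ?thesis using close by linarith
        qed
        then have Xbig: "X \<omega> > real K" using l_K by linarith
        have kK: "k \<ge> K" using Xbig Xk by simp
        have Xpos: "X \<omega> > 0" using Xbig by simp
        define lam where "lam = (X \<omega> / ll n) powr \<alpha>"
        have "\<bar>X \<omega> / ll n - 1\<bar> = \<bar>X \<omega> - ll n\<bar> / ll n" using l_pos by (simp add: field_simps)
        also have "\<dots> < \<delta>" using close l_pos by (simp add: field_simps)
        finally have "dist (X \<omega> / ll n) 1 < \<delta>0" using \<delta> by (simp add: dist_real_def)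
        then have lam1: "\<bar>lam - 1\<bar> < \<eta>" using \<delta>0(2) unfolding lam_def by (simp add: dist_real_def)
        have "lam * real k powr (-\<alpha>) = c n"
          unfolding lam_def c_def Xk[symmetric] using Xpos l_pos
          by (simp add: powr_divide powr_minus field_simps)
        then have "Psi n k = \<phi> f k (lam * real k powr (-\<alpha>))" unfolding Psi_def by simp
        then have "\<bar>Psi n k - EL\<bar> < \<epsilon>/2" using K[OF kK lam1] by simp
        then show ?thesis using False unfolding k_def by simp
      qed
      have Pm: "(\<lambda>\<omega>. Psi n (card {i\<in>A n. R i \<omega>})) \<in> borel_measurable M" by (rule Psi_meas[OF finA])
      have intP: "integrable M (\<lambda>\<omega>. Psi n (card {i\<in>A n. R i \<omega>}))"
        by (rule bdd_integrable[OF Pm Psi_bd])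
      have X_meas[measurable]: "X \<in> borel_measurable M" unfolding X_def by measurable
      have intI: "integrable M (\<lambda>\<omega>. of_bool (\<bar>X \<omega> - m\<bar> \<ge> t) :: real)"
        by (rule bdd_integrable[of _ 1]) auto
      have "\<bar>(\<integral>\<omega>. Psi n (card {i\<in>A n. R i \<omega>}) \<partial>M) - EL\<bar> = \<bar>\<integral>\<omega>. Psi n (card {i\<in>A n. R i \<omega>}) - EL \<partial>M\<bar>"
        using intP prob_space by simp
      also have "\<dots> \<le> (\<integral>\<omega>. \<bar>Psi n (card {i\<in>A n. R i \<omega>}) - EL\<bar> \<partial>M)" by (rule integral_abs_bound)
      also have "\<dots> \<le> (\<integral>\<omega>. \<epsilon>/2 + 2 * Bd * of_bool (\<bar>X \<omega> - m\<bar> \<ge> t) \<partial>M)"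
        by (rule integral_mono) (use intP intI pw in auto)
      also have "\<dots> = \<epsilon>/2 + 2 * Bd * (\<integral>\<omega>. of_bool (\<bar>X \<omega> - m\<bar> \<ge> t) \<partial>M)"
        using intI prob_space by simp
      also have "(\<integral>\<omega>. of_bool (\<bar>X \<omega> - m\<bar> \<ge> t) \<partial>M) \<le> m / t\<^sup>2"
        unfolding X_def m_def by (rule chebyshev_B[OF finA t])
      also have "m / t\<^sup>2 \<le> ll n / t\<^sup>2" using m_le by (intro divide_right_mono) auto
      also have "ll n / t\<^sup>2 = 4 / (\<delta>\<^sup>2 * ll n)" unfolding t_def using l_pos \<delta>
        by (simp add: field_simps power2_eq_square)
      finally have "\<bar>(\<integral>\<omega>. Psi n (card {i\<in>A n. R i \<omega>}) \<partial>M) - EL\<bar> \<le> \<epsilon>/2 + 2 * Bd * (4 / (\<delta>\<^sup>2 * ll n))"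
        using Bd by (simp add: mult_left_mono)
      also have "2 * Bd * (4 / (\<delta>\<^sup>2 * ll n)) < \<epsilon>/2"
      proof -
        have "16 * Bd < ll n * (\<delta>\<^sup>2 * \<epsilon>)" using l_big \<delta> e by (simp add: field_simps)
        then show ?thesis using l_pos \<delta> e by (simp add: field_simps)
      qed
      finally show ?case by (simp add: dist_real_def)
    qed
  qed
qed

end

theorem lemma8:
  fixes M :: "'b measure" and D L :: "'a::euclidean_space measure" and \<alpha> :: real
    and \<Delta>s Dt :: "nat \<Rightarrow> 'b \<Rightarrow> 'a" and R :: "nat \<Rightarrow> 'b \<Rightarrow> bool"
  assumes "prob_space M"
    and "\<alpha> > 0"
    and "prob_space L" and "sets L = sets borel"
    and "\<And>i. \<Delta>s i \<in> borel_measurable M" and "\<And>i. distr M borel (\<Delta>s i) = D"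
    and "prob_space.indep_vars M (\<lambda>_. borel) \<Delta>s UNIV"
    and "conv_in_distr
           (\<lambda>n. distr M borel (\<lambda>\<omega>. (real n powr (-\<alpha>)) *\<^sub>R (\<Sum>i\<in>{1..n}. \<Delta>s i \<omega>))) L"
    and "\<And>n. Dt n \<in> borel_measurable M" and "\<And>n. distr M borel (Dt n) = D"
    and "\<And>n. R n \<in> measurable M (count_space UNIV)"
    and "\<And>n. distr M (count_space UNIV) (R n)
               = measure_pmf (bernoulli_pmf ((real (T (Suc n)) - real (T n)) / real (T (Suc n))))"
    and "prob_space.indep_sets M
           (\<lambda>k. case k of
                   Inl n \<Rightarrow> {R n -` A \<inter> space M | A. A \<in> sets (count_space (UNIV :: bool set))}
                 | Inr n \<Rightarrow> {Dt n -` A \<inter> space M | A. A \<in> sets (borel :: 'a measure)})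
           UNIV"
  shows "conv_in_distr
           (\<lambda>n. distr M borel
              (\<lambda>\<omega>. (1 / (ln (real (T n)) powr \<alpha>)) *\<^sub>R
                    (\<Sum>i\<in>{1..<n}. of_bool (R i \<omega>) *\<^sub>R Dt i \<omega>))) L"
  proof -
  interpret L8 M D L \<alpha> \<Delta>s Dt R
    using assms unfolding L8_def L8_axioms_def by blast
  show ?thesis by (rule main)
qed

end
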